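(* For each librational traveling wave $f$ there exists a real number $\alpha_*>0$ with $\alpha_*\in\sigma(\mathrm{Q})$; and if in addition $c\neq0$, then $G_p(\alpha_* )>0$ for every such $\alpha_*$.
   Context: A traveling wave of speed $c$ ($c^2\neq1$) is a real solution $f$ of $(c^2-1)f''+\sin f=0$, with energy $E$ given by $\tfrac12(c^2-1)(f')^2+1-\cos f=E$; it is librational if $0<E<2$, and then periodic with fundamental period $T$ (smallest $T>0$ with $f(z+T)=f(z)\pmod{2\pi}$). Let $\gamma=1/(c^2-1)$. $\sigma(\mathrm{Q})$ is the set of $\lambda\in\mathbb{C}$ for which $q''+\gamma\cos(f(z))q=\gamma^2\lambda^2q$ has a nontrivial solution bounded on $\mathbb{R}$. Equation (P): $p''-2c\gamma\lambda p'+\gamma(\lambda^2+\cos f(z))p=0$, written as a first-order system for $(p,p')$ with fundamental matrix $F(z;\lambda)$, $F(0;\lambda)=I$; its Floquet multipliers $\rho_\pm(\lambda)$ are the eigenvalues of $F(T;\lambda)$. Define $G_p(\lambda)=\log|\rho_+(\lambda)|\log|\rho_-(\lambda)|$. *)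

theory Defs
  imports "HOL-Analysis.Analysis"
begin

definition gam :: "real \<Rightarrow> real" where
  "gam c = 1 / (c^2 - 1)"

definition traveling_wave :: "real \<Rightarrow> (real \<Rightarrow> real) \<Rightarrow> (real \<Rightarrow> real) \<Rightarrow> bool" where
  "traveling_wave c f f' \<longleftrightarrow> c^2 \<noteq> 1 \<and>
     (\<exists>f''. \<forall>z. (f has_real_derivative f' z) (at z) \<and> (f' has_real_derivative f'' z) (at z)
              \<and> (c^2 - 1) * f'' z + sin (f z) = 0)"

definition energy :: "real \<Rightarrow> (real \<Rightarrow> real) \<Rightarrow> (real \<Rightarrow> real) \<Rightarrow> real \<Rightarrow> bool" where
  "energy c f f' E \<longleftrightarrow> (\<forall>z. (1/2) * (c^2 - 1) * (f' z)^2 + 1 - cos (f z) = E)"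

definition period_mod_2pi :: "(real \<Rightarrow> real) \<Rightarrow> real \<Rightarrow> bool" where
  "period_mod_2pi f T \<longleftrightarrow> (\<exists>k::int. \<forall>z. f (z + T) = f z + 2 * pi * of_int k)"

definition fundamental_period :: "(real \<Rightarrow> real) \<Rightarrow> real \<Rightarrow> bool" where
  "fundamental_period f T \<longleftrightarrow> T > 0 \<and> period_mod_2pi f T \<and>
     (\<forall>S. 0 < S \<and> period_mod_2pi f S \<longrightarrow> T \<le> S)"

definition sigmaQ :: "real \<Rightarrow> (real \<Rightarrow> real) \<Rightarrow> complex set" where
  "sigmaQ c f = {lam. \<exists>q q' :: real \<Rightarrow> complex.
      (\<forall>z. (q has_vector_derivative q' z) (at z) \<and>
           (q' has_vector_derivative
              (of_real ((gam c)^2) * lam^2 * q z - of_real (gam c * cos (f z)) * q z)) (at z))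
      \<and> bounded (range q) \<and> (\<exists>z. q z \<noteq> 0)}"

text \<open>Solutions (p, p') of the first-order system associated with equation (P):
  p'' - 2 c gamma lambda p' + gamma (lambda^2 + cos f) p = 0.\<close>
definition P_sol :: "real \<Rightarrow> (real \<Rightarrow> real) \<Rightarrow> complex \<Rightarrow> (real \<Rightarrow> complex) \<times> (real \<Rightarrow> complex) \<Rightarrow> bool" where
  "P_sol c f lam pq \<longleftrightarrow> (\<forall>z. (fst pq has_vector_derivative snd pq z) (at z) \<and>
      (snd pq has_vector_derivative
         (of_real (2 * c * gam c) * lam * snd pq z
          - of_real (gam c) * (lam^2 + of_real (cos (f z))) * fst pq z)) (at z))"

text \<open>Columns of the fundamental matrix F(z; lambda), F(0; lambda) = I.\<close>
definition fund1 :: "real \<Rightarrow> (real \<Rightarrow> real) \<Rightarrow> complex \<Rightarrow> (real \<Rightarrow> complex) \<times> (real \<Rightarrow> complex)" where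
  "fund1 c f lam = (THE pq. P_sol c f lam pq \<and> fst pq 0 = 1 \<and> snd pq 0 = 0)"

definition fund2 :: "real \<Rightarrow> (real \<Rightarrow> real) \<Rightarrow> complex \<Rightarrow> (real \<Rightarrow> complex) \<times> (real \<Rightarrow> complex)" where
  "fund2 c f lam = (THE pq. P_sol c f lam pq \<and> fst pq 0 = 0 \<and> snd pq 0 = 1)"

text \<open>Monodromy matrix F(T; lambda) = [[a, b], [d, e]] as entries.\<close>
definition monodromy :: "real \<Rightarrow> (real \<Rightarrow> real) \<Rightarrow> real \<Rightarrow> complex \<Rightarrow> complex \<times> complex \<times> complex \<times> complex" where
  "monodromy c f T lam = (fst (fund1 c f lam) T, fst (fund2 c f lam) T,
                        snd (fund1 c f lam) T, snd (fund2 c f lam) T)"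

text \<open>Floquet multipliers: the two eigenvalues (with multiplicity) of the 2x2 matrix F(T; lambda),
  i.e. the roots of rho^2 - tr rho + det.\<close>
definition floquet_plus :: "real \<Rightarrow> (real \<Rightarrow> real) \<Rightarrow> real \<Rightarrow> complex \<Rightarrow> complex" where
  "floquet_plus c f T lam = (case monodromy c f T lam of (a, b, d, e) \<Rightarrow>
      ((a + e) + csqrt ((a + e)^2 - 4 * (a * e - b * d))) / 2)"

definition floquet_minus :: "real \<Rightarrow> (real \<Rightarrow> real) \<Rightarrow> real \<Rightarrow> complex \<Rightarrow> complex" where
  "floquet_minus c f T lam = (case monodromy c f T lam of (a, b, d, e) \<Rightarrow>
      ((a + e) - csqrt ((a + e)^2 - 4 * (a * e - b * d))) / 2)"

definition G_p :: "real \<Rightarrow> (real \<Rightarrow> real) \<Rightarrow> real \<Rightarrow> complex \<Rightarrow> real" where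
  "G_p c f T lam = ln (cmod (floquet_plus c f T lam)) * ln (cmod (floquet_minus c f T lam))"

end

theory Submission
  imports Defs
begin


definition Gf :: "complex \<Rightarrow> (real \<Rightarrow> complex) \<Rightarrow> real \<Rightarrow> complex \<times> complex \<Rightarrow> complex \<times> complex" where
  "Gf a b t x = (snd x, a * snd x + b t * fst x)"

lemma Gf_diff: "Gf a b t x - Gf a b t y = Gf a b t (x - y)"
  by (simp add: Gf_def algebra_simps)

lemma Gf_norm:
  assumes "cmod (b t) \<le> M"
  shows "norm (Gf a b t x) \<le> (1 + cmod a + M) * norm x"
proof -
  have n1: "cmod (fst x) \<le> norm x" "cmod (snd x) \<le> norm x"
    by (metis norm_fst_le prod.collapse, metis norm_snd_le prod.collapse)
  have "norm (Gf a b t x) \<le> cmod (snd x) + cmod (a * snd x + b t * fst x)"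
    unfolding Gf_def by (rule norm_Pair_le)
  also have "\<dots> \<le> cmod (snd x) + (cmod a * cmod (snd x) + cmod (b t) * cmod (fst x))"
    by (metis add_left_mono norm_mult norm_triangle_ineq)
  also have "\<dots> \<le> norm x + (cmod a * norm x + M * norm x)"
    using n1 assms order_trans[OF norm_ge_zero assms] by (intro add_mono mult_mono) auto
  finally show ?thesis by (simp add: algebra_simps)
qed

definition Iint :: "(real \<Rightarrow> 'a::banach) \<Rightarrow> real \<Rightarrow> 'a" where
  "Iint g t = integral {-(\<bar>t\<bar>+1)..t} g - integral {-(\<bar>t\<bar>+1)..0} g"

lemma Iint_R0:
  fixes g :: "real \<Rightarrow> 'a::banach"
  assumes g: "continuous_on UNIV g" and R: "\<bar>t\<bar> \<le> R1" "R1 \<le> R2"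
  shows "integral {-R1..t} g - integral {-R1..0} g = integral {-R2..t} g - integral {-R2..0} g"
proof -
  have i: "g integrable_on {a..b}" for a b
    by (rule integrable_continuous_interval) (rule continuous_on_subset[OF g], simp)
  have "integral {-R2..-R1} g + integral {-R1..t} g = integral {-R2..t} g"
    by (rule Henstock_Kurzweil_Integration.integral_combine) (use R i in auto)
  moreover have "integral {-R2..-R1} g + integral {-R1..0} g = integral {-R2..0} g"
    by (rule Henstock_Kurzweil_Integration.integral_combine) (use R i in auto)
  ultimately show ?thesis by (metis add_diff_cancel_left)
qed

lemma Iint_R:
  fixes g :: "real \<Rightarrow> 'a::banach"
  assumes g: "continuous_on UNIV g" and R: "\<bar>t\<bar> \<le> R"
  shows "Iint g t = integral {-R..t} g - integral {-R..0} g"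
  unfolding Iint_def
  using Iint_R0[OF g, of t R "\<bar>t\<bar>+1"] Iint_R0[OF g, of t "\<bar>t\<bar>+1" R] R
  by (cases "R \<le> \<bar>t\<bar>+1") auto

lemma Iint_0: "Iint g 0 = 0"
  by (simp add: Iint_def)

lemma Iint_deriv:
  fixes g :: "real \<Rightarrow> 'a::banach"
  assumes g: "continuous_on UNIV g"
  shows "(Iint g has_vector_derivative g t) (at t)"
proof -
  define R where "R = \<bar>t\<bar> + 2"
  have "((\<lambda>u. integral {-R..u} g) has_vector_derivative g t) (at t within {-R..R})"
    by (rule integral_has_vector_derivative) (auto intro: continuous_on_subset[OF g] simp: R_def)
  then have "((\<lambda>u. integral {-R..u} g) has_vector_derivative g t) (at t)"
    by (subst (asm) at_within_interior) (auto simp: R_def)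
  then have d: "((\<lambda>u. integral {-R..u} g - integral {-R..0} g) has_vector_derivative g t) (at t)"
    by (rule derivative_eq_intros) auto
  show ?thesis
    apply (rule has_vector_derivative_transform_within_open[OF d, of "ball t 1"])
    apply simp apply simp
    using Iint_R[OF g, of _ R] by (auto simp: R_def dist_real_def)
qed

lemma Iint_cont:
  fixes g :: "real \<Rightarrow> 'a::banach"
  assumes g: "continuous_on UNIV g"
  shows "continuous_on UNIV (Iint g)"
  by (rule continuous_on_vector_derivative[of UNIV "Iint g" g]) 
     (auto intro: has_vector_derivative_at_within Iint_deriv[OF g])

lemma Iint_diff:
  fixes g h :: "real \<Rightarrow> 'a::banach"
  assumes g: "continuous_on UNIV g" and h: "continuous_on UNIV h"
  shows "Iint (\<lambda>s. g s - h s) t = Iint g t - Iint h t"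
proof -
  have i: "f integrable_on {a..b}" if "continuous_on UNIV f" for a b and f :: "real \<Rightarrow> 'a"
    by (rule integrable_continuous_interval) (rule continuous_on_subset[OF that], simp)
  show ?thesis unfolding Iint_def
    by (simp add: integral_diff i[OF g] i[OF h])
qed

lemma exp_int:
  fixes K :: real assumes K: "K > 0" and "0 \<le> t"
  shows "((\<lambda>s. exp (K * s)) has_integral (exp (K*t) - 1) / K) {0..t}"
proof -
  have "((\<lambda>s. exp (K * s) / K) has_vector_derivative exp (K * x)) (at x within {0..t})" for x
    using K by (auto intro!: derivative_eq_intros simp: has_real_derivative_iff_has_vector_derivative[symmetric])
  from fundamental_theorem_of_calculus[OF assms(2) this]
  show ?thesis by (simp add: diff_divide_distrib)
qed

lemma Iint_bound:
  fixes g :: "real \<Rightarrow> 'a::banach"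
  assumes g: "continuous_on UNIV g" and K: "K > 0"
    and b: "\<And>s. norm (g s) \<le> C * exp (K * \<bar>s\<bar>)"
  shows "norm (Iint g t) \<le> C * exp (K * \<bar>t\<bar>) / K"
proof -
  have i: "g integrable_on {a..b}" for a b
    by (rule integrable_continuous_interval) (rule continuous_on_subset[OF g], simp)
  have C: "C \<ge> 0" using order_trans[OF norm_ge_zero b[of 0]] by simp
  show ?thesis
  proof (cases "t \<ge> 0")
    case True
    have "Iint g t = integral {-t..t} g - integral {-t..0} g" using Iint_R[OF g, of t t] True by simp
    also have "\<dots> = integral {0..t} g"
      using Henstock_Kurzweil_Integration.integral_combine[OF _ _ i, of "-t" 0 t] True by (simp add: algebra_simps)
    finally have e: "Iint g t = integral {0..t} g" .
    have "norm (integral {0..t} g) \<le> integral {0..t} (\<lambda>s. C * exp (K * s))"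
      apply (rule integral_norm_bound_integral[OF i])
      using exp_int[OF K True] has_integral_mult_right apply (metis has_integral_integrable)
      using b by (metis abs_of_nonneg atLeastAtMost_iff)
    also have "\<dots> = C * ((exp (K*t) - 1) / K)"
      using integral_unique[OF has_integral_mult_right[OF exp_int[OF K True], of C]] by simp
    also have "\<dots> \<le> C * exp (K * \<bar>t\<bar>) / K" using C K True
      by (simp add: divide_simps algebra_simps)
    finally show ?thesis using e by simp
  next
    case False
    have "Iint g t = integral {t..t} g - integral {t..0} g" using Iint_R[OF g, of t "-t"] False by simp
    also have "\<dots> = - integral {t..0} g" by simp
    finally have e: "Iint g t = - integral {t..0} g" .
    have ei: "((\<lambda>s. exp (K * s)) has_integral (exp (K*(-t)) - 1) / K) {0..-t}"
      using exp_int[OF K, of "-t"] False by simp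
    have ei2: "((\<lambda>s. exp (K * - s)) has_integral (exp (K*(-t)) - 1) / K) {t..0}"
    proof -
      have "((\<lambda>s. exp (K * - s)) has_integral (exp (K*(-t)) - 1) / K) {- (-t)..- 0}"
        by (rule iffD2[OF has_integral_reflect_real[of "\<lambda>s. exp (K * s)"]]) (rule ei)
      then show ?thesis by simp
    qed
    have "norm (integral {t..0} g) \<le> integral {t..0} (\<lambda>s. C * exp (K * - s))"
      apply (rule integral_norm_bound_integral[OF i])
      using ei2 has_integral_mult_right apply (metis has_integral_integrable)
      using b by (metis abs_of_nonpos atLeastAtMost_iff mult_minus_right)
    also have "\<dots> = C * ((exp (K*(-t)) - 1) / K)"
      using integral_unique[OF has_integral_mult_right[OF ei2, of C]] by simp
    also have "\<dots> \<le> C * exp (K * \<bar>t\<bar>) / K" using C K False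
      by (simp add: divide_simps algebra_simps)
    finally show ?thesis using e by simp
  qed
qed

lemma lin_exist:
  fixes a :: complex and b :: "real \<Rightarrow> complex" and x0 :: "complex \<times> complex"
  assumes bc: "continuous_on UNIV b" and bM: "\<And>t. cmod (b t) \<le> M"
  shows "\<exists>x. x 0 = x0 \<and> (\<forall>t. (x has_vector_derivative Gf a b t (x t)) (at t))"
proof -
  define L where "L = 1 + cmod a + M"
  have M0: "M \<ge> 0" using bM[of 0] norm_ge_zero[of "b 0"] by linarith
  have L1: "L \<ge> 1" using M0 by (simp add: L_def)
  define K where "K = 2 * L"
  have K0: "K > 0" using L1 by (simp add: K_def)
  define w where "w t = exp (K * \<bar>t\<bar>)" for t
  have w1: "w t \<ge> 1" for t using K0 by (simp add: w_def)
  have wp: "w t > 0" for t by (simp add: w_def)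
  have cw: "continuous_on UNIV w" unfolding w_def by (intro continuous_intros)
  have cG: "continuous_on UNIV (\<lambda>s. Gf a b s (y s))" if "continuous_on UNIV y" for y
    unfolding Gf_def by (intro continuous_intros that bc)
  have GL: "norm (Gf a b s u) \<le> L * norm u" for s u
    unfolding L_def by (rule Gf_norm[OF bM])
  define g where "g X s = Gf a b s (w s *\<^sub>R apply_bcontfun X s)" for X s
  have cg: "continuous_on UNIV (g X)" for X
    unfolding g_def by (rule cG) (intro continuous_intros cw, simp)
  define \<Phi> where "\<Phi> X t = (1 / w t) *\<^sub>R (x0 + Iint (g X) t)" for X t
  have bcf: "\<Phi> X \<in> bcontfun" for X
  proof -
    have wi: "continuous_on UNIV (\<lambda>t. 1 / w t)"
      by (rule continuous_on_divide[OF continuous_on_const cw]) (metis w1 not_one_le_zero)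
    have c: "continuous_on UNIV (\<Phi> X)"
      unfolding \<Phi>_def
      by (rule continuous_on_scaleR[OF wi continuous_on_add[OF continuous_on_const Iint_cont[OF cg]]])
    obtain B where B: "\<And>s. norm (apply_bcontfun X s) \<le> B"
      using bounded_apply_bcontfun[of X] unfolding bounded_iff by auto
    have gb: "norm (g X s) \<le> (L * B) * exp (K * \<bar>s\<bar>)" for s
    proof -
      have "norm (g X s) \<le> L * norm (w s *\<^sub>R apply_bcontfun X s)" unfolding g_def by (rule GL)
      also have "\<dots> = L * (w s * norm (apply_bcontfun X s))" using w1[of s] by simp
      also have "\<dots> \<le> L * (w s * B)" using L1 w1[of s] B[of s] by (intro mult_left_mono) auto
      finally show ?thesis by (simp add: w_def mult_ac)
    qed
    have "norm (\<Phi> X t) \<le> norm x0 + L * B / K" for t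
    proof -
      have i: "norm (Iint (g X) t) \<le> (L * B) * w t / K"
        using Iint_bound[OF cg K0 gb] by (simp add: w_def)
      have "norm (\<Phi> X t) = (1 / w t) * norm (x0 + Iint (g X) t)"
        unfolding \<Phi>_def using w1[of t] by simp
      also have "\<dots> \<le> (1 / w t) * (norm x0 + (L * B) * w t / K)"
        using w1[of t] i norm_triangle_ineq[of x0 "Iint (g X) t"]
        by (intro mult_left_mono) auto
      also have "\<dots> = norm x0 / w t + L * B / K" using w1[of t] by (simp add: field_simps)
      also have "\<dots> \<le> norm x0 + L * B / K"
        using divide_left_mono[OF w1[of t] norm_ge_zero[of x0]] w1[of t] by simp
      finally show ?thesis .
    qed
    then have "bounded (range (\<Phi> X))" unfolding bounded_iff by blast
    with c show ?thesis unfolding bcontfun_def by simp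
  qed
  define \<Psi> where "\<Psi> X = Bcontfun (\<Phi> X)" for X
  have app: "apply_bcontfun (\<Psi> X) = \<Phi> X" for X
    unfolding \<Psi>_def using bcf Bcontfun_inverse by blast
  have contr: "dist (\<Psi> X) (\<Psi> Y) \<le> (1/2) * dist X Y" for X Y
  proof (rule dist_bound)
    fix t
    have gb: "norm (g X s - g Y s) \<le> (L * dist X Y) * exp (K * \<bar>s\<bar>)" for s
    proof -
      have "norm (g X s - g Y s) = norm (Gf a b s (w s *\<^sub>R (apply_bcontfun X s - apply_bcontfun Y s)))"
        unfolding g_def Gf_diff by (simp add: algebra_simps)
      also have "\<dots> \<le> L * norm (w s *\<^sub>R (apply_bcontfun X s - apply_bcontfun Y s))" by (rule GL)
      also have "\<dots> = L * (w s * dist (apply_bcontfun X s) (apply_bcontfun Y s))"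
        using w1[of s] by (simp add: dist_norm)
      also have "\<dots> \<le> L * (w s * dist X Y)"
        using L1 w1[of s] dist_bounded[of X s Y] by (intro mult_left_mono) auto
      finally show ?thesis by (simp add: w_def mult_ac)
    qed
    have cd: "continuous_on UNIV (\<lambda>s. g X s - g Y s)" by (intro continuous_intros cg)
    have i: "norm (Iint (g X) t - Iint (g Y) t) \<le> (L * dist X Y) * w t / K"
      using Iint_bound[OF cd K0 gb, of t] Iint_diff[OF cg cg] by (simp add: w_def)
    have e: "\<Phi> X t - \<Phi> Y t = (1 / w t) *\<^sub>R (Iint (g X) t - Iint (g Y) t)"
      unfolding \<Phi>_def by (simp add: algebra_simps)
    have "dist (\<Phi> X t) (\<Phi> Y t) = (1 / w t) * norm (Iint (g X) t - Iint (g Y) t)"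
      unfolding dist_norm e using w1[of t] by simp
    also have "\<dots> \<le> (1 / w t) * ((L * dist X Y) * w t / K)"
      using w1[of t] i by (intro mult_left_mono) auto
    also have "\<dots> = (1/2) * dist X Y" using wp[of t] L1 by (simp add: K_def field_simps)
    finally show "dist (apply_bcontfun (\<Psi> X) t) (apply_bcontfun (\<Psi> Y) t) \<le> (1/2) * dist X Y"
      by (simp add: app)
  qed
  have "\<exists>!X. \<Psi> X = X" by (rule banach_fix_type[of "1/2"]) (use contr in auto)
  then obtain X where X: "\<Psi> X = X" by blast
  have e1: "apply_bcontfun X = \<Phi> X" using app[of X] unfolding X .
  define x where "x t = w t *\<^sub>R apply_bcontfun X t" for t
  have xe: "x t = x0 + Iint (\<lambda>s. Gf a b s (x s)) t" for t
  proof -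
    have "x t = x0 + Iint (g X) t" unfolding x_def e1 \<Phi>_def using wp[of t] by simp
    then show ?thesis unfolding g_def x_def .
  qed
  have cx: "continuous_on UNIV x" unfolding x_def
    by (rule continuous_on_scaleR[OF cw continuous_on_apply_bcontfun])
  have xf: "(\<lambda>t. x0 + Iint (\<lambda>s. Gf a b s (x s)) t) = x" by (rule ext) (rule xe[symmetric])
  have D: "((\<lambda>t. x0 + Iint (\<lambda>s. Gf a b s (x s)) t) has_vector_derivative Gf a b t (x t)) (at t)" for t
    using has_vector_derivative_add[OF has_vector_derivative_const Iint_deriv[OF cG[OF cx]]] by simp
  have "(x has_vector_derivative Gf a b t (x t)) (at t)" for t
    using D[of t] unfolding xf .
  moreover have "x 0 = x0" using xe[of 0] by (simp add: Iint_0)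
  ultimately show ?thesis by blast
qed

lemma lin_unique:
  fixes x :: "real \<Rightarrow> complex \<times> complex"
  assumes bM: "\<And>t. cmod (b t) \<le> M"
    and d: "\<And>t. (x has_vector_derivative Gf a b t (x t)) (at t)"
    and x0: "x 0 = 0"
  shows "x t = 0"
proof -
  define L where "L = 1 + cmod a + M"
  have M0: "M \<ge> 0" using order_trans[OF norm_ge_zero bM[of 0]] .
  have L1: "L \<ge> 1" using M0 by (simp add: L_def)
  define N where "N s = inner (x s) (x s)" for s
  have dN: "(N has_real_derivative 2 * inner (x s) (Gf a b s (x s))) (at s)" for s
  proof -
    have dx: "(x has_derivative (\<lambda>h. h *\<^sub>R Gf a b s (x s))) (at s)"
      using d[of s] by (simp add: has_vector_derivative_def)
    have "(N has_derivative (\<lambda>h. inner (x s) (h *\<^sub>R Gf a b s (x s)) + inner (h *\<^sub>R Gf a b s (x s)) (x s))) (at s)"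
      unfolding N_def by (rule has_derivative_inner[OF dx dx])
    moreover have "(\<lambda>h. inner (x s) (h *\<^sub>R Gf a b s (x s)) + inner (h *\<^sub>R Gf a b s (x s)) (x s))
        = (*) (2 * inner (x s) (Gf a b s (x s)))"
      by (auto simp: fun_eq_iff inner_commute algebra_simps)
    ultimately have H: "(N has_derivative (*) (2 * inner (x s) (Gf a b s (x s)))) (at s)" by metis
    show ?thesis using H by (simp only: has_field_derivative_def)
  qed
  have Nn: "N s = (norm (x s))^2" for s by (simp add: N_def power2_norm_eq_inner)
  have bnd: "\<bar>2 * inner (x s) (Gf a b s (x s))\<bar> \<le> 2 * L * N s" for s
  proof -
    have "\<bar>inner (x s) (Gf a b s (x s))\<bar> \<le> norm (x s) * norm (Gf a b s (x s))"
      by (rule Cauchy_Schwarz_ineq2)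
    also have "\<dots> \<le> norm (x s) * (L * norm (x s))"
      unfolding L_def by (intro mult_left_mono Gf_norm[OF bM]) auto
    finally show ?thesis by (simp add: Nn power2_eq_square mult_ac)
  qed
  have N0: "N 0 = 0" by (simp add: N_def x0)
  have Nge: "N s \<ge> 0" for s by (simp add: Nn)
  have "N t \<le> 0"
  proof (cases "t \<ge> 0")
    case True
    define \<phi> where "\<phi> s = N s * exp (-(2*L) * s)" for s
    have "\<phi> 0 \<ge> \<phi> t"
    proof (rule DERIV_nonpos_imp_nonincreasing[of 0 t \<phi>, OF True])
      fix s
      have "(\<phi> has_real_derivative (2 * inner (x s) (Gf a b s (x s))) * exp (-(2*L) * s) + N s * (exp (-(2*L) * s) * (-(2*L)))) (at s)"
        unfolding \<phi>_def by (intro derivative_eq_intros dN) (auto intro: dN)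
      moreover have "(2 * inner (x s) (Gf a b s (x s))) * exp (-(2*L) * s) + N s * (exp (-(2*L) * s) * (-(2*L))) \<le> 0"
      proof -
        have "2 * inner (x s) (Gf a b s (x s)) \<le> 2 * L * N s" using bnd[of s] by linarith
        then have "(2 * inner (x s) (Gf a b s (x s))) * exp (-(2*L) * s) \<le> (2 * L * N s) * exp (-(2*L) * s)"
          by (rule mult_right_mono) simp
        then show ?thesis by (simp add: algebra_simps)
      qed
      ultimately show "\<exists>y. DERIV \<phi> s :> y \<and> y \<le> 0" by blast
    qed
    then have "N t * exp (-(2*L) * t) \<le> 0" by (simp add: \<phi>_def N0)
    then show ?thesis by (simp add: mult_le_0_iff)
  next
    case False
    define \<psi> where "\<psi> s = N s * exp ((2*L) * s)" for s
    have "\<psi> t \<le> \<psi> 0"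
    proof (rule DERIV_nonneg_imp_nondecreasing[of t 0 \<psi>])
      show "t \<le> 0" using False by simp
      fix s
      have "(\<psi> has_real_derivative (2 * inner (x s) (Gf a b s (x s))) * exp ((2*L) * s) + N s * (exp ((2*L) * s) * (2*L))) (at s)"
        unfolding \<psi>_def by (intro derivative_eq_intros dN) (auto intro: dN)
      moreover have "(2 * inner (x s) (Gf a b s (x s))) * exp ((2*L) * s) + N s * (exp ((2*L) * s) * (2*L)) \<ge> 0"
      proof -
        define I where "I = inner (x s) (Gf a b s (x s))"
        define e where "e = exp ((2*L) * s)"
        have "e > 0" by (simp add: e_def)
        have "- (2 * L * N s) \<le> 2 * I" using bnd[of s] unfolding I_def by (simp add: abs_le_iff)
        then have "0 \<le> (2 * I + 2 * L * N s) * e" using \<open>e > 0\<close> by simp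
        moreover have "(2 * I + 2 * L * N s) * e = 2 * I * e + N s * (e * (2*L))" by (simp add: algebra_simps)
        ultimately show ?thesis by (simp add: I_def e_def)
      qed
      ultimately show "\<exists>y. DERIV \<psi> s :> y \<and> y \<ge> 0" by blast
    qed
    then have "N t * exp ((2*L) * t) \<le> 0" by (simp add: \<psi>_def N0)
    then show ?thesis by (simp add: mult_le_0_iff)
  qed
  then have "N t = 0" using Nge[of t] by linarith
  then show ?thesis by (simp add: Nn)
qed



lemma vd_pair_iff:
  "((\<lambda>z. (p z, q z)) has_vector_derivative (u, v)) (at t) \<longleftrightarrow>
   (p has_vector_derivative u) (at t) \<and> (q has_vector_derivative v) (at t)"
proof
  assume H: "((\<lambda>z. (p z, q z)) has_vector_derivative (u, v)) (at t)"
  show "(p has_vector_derivative u) (at t) \<and> (q has_vector_derivative v) (at t)"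
    using bounded_linear.has_vector_derivative[OF bounded_linear_fst H]
          bounded_linear.has_vector_derivative[OF bounded_linear_snd H] by simp
qed (auto intro: has_vector_derivative_Pair)

definition aP :: "real \<Rightarrow> complex \<Rightarrow> complex" where
  "aP c lam = of_real (2 * c * gam c) * lam"
definition bP :: "real \<Rightarrow> (real \<Rightarrow> real) \<Rightarrow> complex \<Rightarrow> real \<Rightarrow> complex" where
  "bP c f lam z = - (of_real (gam c) * (lam^2 + of_real (cos (f z))))"

lemma P_sol_iff:
  "P_sol c f lam (p, p') \<longleftrightarrow>
   (\<forall>z. ((\<lambda>z. (p z, p' z)) has_vector_derivative Gf (aP c lam) (bP c f lam) z (p z, p' z)) (at z))"
proof -
  have e: "of_real (2 * c * gam c) * lam * p' z - of_real (gam c) * (lam^2 + of_real (cos (f z))) * p z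
     = aP c lam * p' z + bP c f lam z * p z" for z
    by (simp add: aP_def bP_def algebra_simps)
  show ?thesis unfolding P_sol_def Gf_def fst_conv snd_conv vd_pair_iff e by (rule refl)
qed

lemma bP_cont:
  assumes "continuous_on UNIV f"
  shows "continuous_on UNIV (bP c f lam)"
  unfolding bP_def by (intro continuous_intros assms)

lemma bP_bound: "cmod (bP c f lam z) \<le> \<bar>gam c\<bar> * ((cmod lam)^2 + 1)"
proof -
  have "cmod (lam^2 + of_real (cos (f z))) \<le> cmod (lam^2) + cmod (complex_of_real (cos (f z)))"
    by (rule norm_triangle_ineq)
  also have "\<dots> \<le> (cmod lam)^2 + 1"
    using abs_cos_le_one[of "f z"] by (simp add: norm_power)
  finally have h: "cmod (lam^2 + of_real (cos (f z))) \<le> (cmod lam)^2 + 1" .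
  have "cmod (bP c f lam z) = \<bar>gam c\<bar> * cmod (lam^2 + of_real (cos (f z)))"
    unfolding bP_def by (simp only: norm_minus_cancel norm_mult norm_of_real)
  also have "\<dots> \<le> \<bar>gam c\<bar> * ((cmod lam)^2 + 1)" by (rule mult_left_mono[OF h]) simp
  finally show ?thesis .
qed

lemma P_exists:
  assumes "continuous_on UNIV f"
  shows "\<exists>pq. P_sol c f lam pq \<and> fst pq 0 = u \<and> snd pq 0 = v"
proof -
  obtain x where x: "x 0 = (u, v)" "\<And>t. (x has_vector_derivative Gf (aP c lam) (bP c f lam) t (x t)) (at t)"
    using lin_exist[OF bP_cont[OF assms] bP_bound, of "(u,v)" "aP c lam" c lam] by blast
  have "P_sol c f lam (\<lambda>z. fst (x z), \<lambda>z. snd (x z))"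
    unfolding P_sol_iff using x(2) by simp
  then show ?thesis using x(1) by (intro exI[of _ "(\<lambda>z. fst (x z), \<lambda>z. snd (x z))"]) simp
qed

lemma P_zero:
  assumes "P_sol c f lam (p, p')" "p 0 = 0" "p' 0 = 0"
  shows "p z = 0 \<and> p' z = 0"
proof -
  have "(\<lambda>z. (p z, p' z)) z = 0"
    by (rule lin_unique[OF bP_bound]) (use assms in \<open>auto simp: P_sol_iff prod_eq_iff\<close>)
  then show ?thesis by (simp add: prod_eq_iff)
qed

lemma P_lin:
  assumes "P_sol c f lam (p, p')" "P_sol c f lam (q, q')"
  shows "P_sol c f lam (\<lambda>z. \<alpha> * p z + \<beta> * q z, \<lambda>z. \<alpha> * p' z + \<beta> * q' z)"
  unfolding P_sol_def fst_conv snd_conv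
proof (intro allI conjI)
  fix z
  let ?A = "of_real (2 * c * gam c) * lam" and ?B = "of_real (gam c) * (lam^2 + of_real (cos (f z)))"
  have d: "(p has_vector_derivative p' z) (at z)" "(q has_vector_derivative q' z) (at z)"
    "(p' has_vector_derivative ?A * p' z - ?B * p z) (at z)"
    "(q' has_vector_derivative ?A * q' z - ?B * q z) (at z)"
    using assms unfolding P_sol_def by auto
  show "((\<lambda>z. \<alpha> * p z + \<beta> * q z) has_vector_derivative \<alpha> * p' z + \<beta> * q' z) (at z)"
    by (intro has_vector_derivative_add has_vector_derivative_mult_right d)
  have D: "((\<lambda>z. \<alpha> * p' z + \<beta> * q' z) has_vector_derivative
      \<alpha> * (?A * p' z - ?B * p z) + \<beta> * (?A * q' z - ?B * q z)) (at z)"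
    by (intro has_vector_derivative_add has_vector_derivative_mult_right d)
  have e: "\<alpha> * (?A * p' z - ?B * p z) + \<beta> * (?A * q' z - ?B * q z)
     = ?A * (\<alpha> * p' z + \<beta> * q' z) - ?B * (\<alpha> * p z + \<beta> * q z)"
    by (simp add: algebra_simps)
  show "((\<lambda>z. \<alpha> * p' z + \<beta> * q' z) has_vector_derivative
      ?A * (\<alpha> * p' z + \<beta> * q' z) - ?B * (\<alpha> * p z + \<beta> * q z)) (at z)"
    using D unfolding e .
qed

lemma P_shift:
  assumes "P_sol c f lam (p, p')" and per: "\<And>z. cos (f (z + T)) = cos (f z)"
  shows "P_sol c f lam (\<lambda>z. p (z + T), \<lambda>z. p' (z + T))"
  unfolding P_sol_def fst_conv snd_conv
proof (intro allI conjI)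
  fix z
  have d1: "(p has_vector_derivative p' (z + T)) (at (z + T))"
    and d2: "(p' has_vector_derivative (of_real (2 * c * gam c) * lam * p' (z+T)
          - of_real (gam c) * (lam^2 + of_real (cos (f (z+T)))) * p (z+T))) (at (z+T))"
    using assms(1) unfolding P_sol_def by auto
  have s: "((\<lambda>z. z + T) has_vector_derivative 1) (at z)"
    by (auto intro!: derivative_eq_intros)
  show "((\<lambda>z. p (z + T)) has_vector_derivative p' (z + T)) (at z)"
    using vector_diff_chain_at[OF s d1] by (simp add: o_def)
  show "((\<lambda>z. p' (z + T)) has_vector_derivative
         of_real (2 * c * gam c) * lam * p' (z + T) - of_real (gam c) * (lam^2 + of_real (cos (f z))) * p (z + T)) (at z)"
    using vector_diff_chain_at[OF s d2] per[of z] by (simp add: o_def)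
qed



lemma P_uniq:
  assumes "P_sol c f lam pq1" "P_sol c f lam pq2" "fst pq1 0 = fst pq2 0" "snd pq1 0 = snd pq2 0"
  shows "pq1 = pq2"
proof -
  obtain p p' where 1: "pq1 = (p, p')" by (cases pq1)
  obtain q q' where 2: "pq2 = (q, q')" by (cases pq2)
  have "P_sol c f lam (\<lambda>z. 1 * p z + (-1) * q z, \<lambda>z. 1 * p' z + (-1) * q' z)"
    by (rule P_lin) (use assms 1 2 in auto)
  then have "P_sol c f lam (\<lambda>z. p z - q z, \<lambda>z. p' z - q' z)" by simp
  from P_zero[OF this] have "p z - q z = 0 \<and> p' z - q' z = 0" for z
    using assms 1 2 by simp
  then show ?thesis using 1 2 by (auto simp: fun_eq_iff)
qed

lemma fund1_prop:
  assumes "continuous_on UNIV f"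
  shows "P_sol c f lam (fund1 c f lam) \<and> fst (fund1 c f lam) 0 = 1 \<and> snd (fund1 c f lam) 0 = 0"
  unfolding fund1_def
  by (rule theI') (use P_exists[OF assms] P_uniq in metis)

lemma fund2_prop:
  assumes "continuous_on UNIV f"
  shows "P_sol c f lam (fund2 c f lam) \<and> fst (fund2 c f lam) 0 = 0 \<and> snd (fund2 c f lam) 0 = 1"
  unfolding fund2_def
  by (rule theI') (use P_exists[OF assms] P_uniq in metis)

lemma P_repr:
  assumes cf: "continuous_on UNIV f" and P: "P_sol c f lam (p, p')"
  shows "p z = p 0 * fst (fund1 c f lam) z + p' 0 * fst (fund2 c f lam) z \<and>
         p' z = p 0 * snd (fund1 c f lam) z + p' 0 * snd (fund2 c f lam) z"
proof -
  obtain y1 y1' where y1: "fund1 c f lam = (y1, y1')" by (cases "fund1 c f lam")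
  obtain y2 y2' where y2: "fund2 c f lam = (y2, y2')" by (cases "fund2 c f lam")
  have s1: "P_sol c f lam (y1, y1')" "y1 0 = 1" "y1' 0 = 0" using fund1_prop[OF cf, of c lam] y1 by auto
  have s2: "P_sol c f lam (y2, y2')" "y2 0 = 0" "y2' 0 = 1" using fund2_prop[OF cf, of c lam] y2 by auto
  have "P_sol c f lam (\<lambda>z. p 0 * y1 z + p' 0 * y2 z, \<lambda>z. p 0 * y1' z + p' 0 * y2' z)"
    by (rule P_lin[OF s1(1) s2(1)])
  from P_uniq[OF P this] s1 s2
  have eq: "(p, p') = (\<lambda>z. p 0 * y1 z + p' 0 * y2 z, \<lambda>z. p 0 * y1' z + p' 0 * y2' z)" by simp
  have "p z = p 0 * y1 z + p' 0 * y2 z"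
    using fun_cong[OF arg_cong[OF eq, of fst], of z] by (simp only: fst_conv)
  moreover have "p' z = p 0 * y1' z + p' 0 * y2' z"
    using fun_cong[OF arg_cong[OF eq, of snd], of z] by (simp only: snd_conv)
  ultimately show ?thesis using y1 y2 by simp
qed

lemma P_rec:
  assumes cf: "continuous_on UNIV f" and P: "P_sol c f lam (p, p')"
    and per: "\<And>z. cos (f (z + T)) = cos (f z)"
  defines "A \<equiv> fst (fund1 c f lam) T" and "B \<equiv> fst (fund2 c f lam) T"
    and "Dd \<equiv> snd (fund1 c f lam) T" and "E \<equiv> snd (fund2 c f lam) T"
  shows "p (z + T + T) - (A + E) * p (z + T) + (A * E - B * Dd) * p z = 0"
proof -
  have S1: "P_sol c f lam (\<lambda>z. p (z + T), \<lambda>z. p' (z + T))" by (rule P_shift[OF P per])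
  have S2: "P_sol c f lam (\<lambda>z. p (z + T + T), \<lambda>z. p' (z + T + T))"
    using P_shift[OF S1 per] by simp
  have G1: "P_sol c f lam (\<lambda>z. 1 * p (z + T + T) + (- (A + E)) * p (z + T),
                         \<lambda>z. 1 * p' (z + T + T) + (- (A + E)) * p' (z + T))"
    by (rule P_lin[OF S2 S1])
  have G: "P_sol c f lam (\<lambda>z. 1 * (1 * p (z + T + T) + (- (A + E)) * p (z + T)) + (A * E - B * Dd) * p z,
                         \<lambda>z. 1 * (1 * p' (z + T + T) + (- (A + E)) * p' (z + T)) + (A * E - B * Dd) * p' z)"
    by (rule P_lin[OF G1 P])
  have rT: "p T = p 0 * A + p' 0 * B" "p' T = p 0 * Dd + p' 0 * E"
    using P_repr[OF cf P, of T] by (simp_all add: A_def B_def Dd_def E_def)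
  have r2T: "p (T + T) = p T * A + p' T * B" "p' (T + T) = p T * Dd + p' T * E"
    using P_repr[OF cf S1, of T] by (simp_all add: A_def B_def Dd_def E_def)
  have "(1 * (1 * p (0 + T + T) + (- (A + E)) * p (0 + T)) + (A * E - B * Dd) * p 0) = 0"
    using rT r2T by (simp add: algebra_simps)
  moreover have "(1 * (1 * p' (0 + T + T) + (- (A + E)) * p' (0 + T)) + (A * E - B * Dd) * p' 0) = 0"
    using rT r2T by (simp add: algebra_simps)
  ultimately have "1 * (1 * p (z + T + T) + (- (A + E)) * p (z + T)) + (A * E - B * Dd) * p z = 0"
    using P_zero[OF G] by blast
  then show ?thesis by (simp add: algebra_simps)
qed

lemma P_wronsk:
  assumes cf: "continuous_on UNIV f"
  shows "fst (fund1 c f lam) T * snd (fund2 c f lam) T - fst (fund2 c f lam) T * snd (fund1 c f lam) T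
         = exp (of_real (2 * c * gam c) * lam * of_real T)"
proof -
  obtain y1 y1' where y1: "fund1 c f lam = (y1, y1')" by (cases "fund1 c f lam")
  obtain y2 y2' where y2: "fund2 c f lam = (y2, y2')" by (cases "fund2 c f lam")
  have s1: "P_sol c f lam (y1, y1')" "y1 0 = 1" "y1' 0 = 0" using fund1_prop[OF cf, of c lam] y1 by auto
  have s2: "P_sol c f lam (y2, y2')" "y2 0 = 0" "y2' 0 = 1" using fund2_prop[OF cf, of c lam] y2 by auto
  define K where "K = of_real (2 * c * gam c) * lam"
  define W where "W z = (y1 z * y2' z - y2 z * y1' z) * exp (- K * of_real z)" for z
  have dW: "(W has_vector_derivative 0) (at z)" for z
  proof -
    let ?B = "\<lambda>z. of_real (gam c) * (lam^2 + of_real (cos (f z)))"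
    have d: "(y1 has_vector_derivative y1' z) (at z)" "(y2 has_vector_derivative y2' z) (at z)"
      "(y1' has_vector_derivative K * y1' z - ?B z * y1 z) (at z)"
      "(y2' has_vector_derivative K * y2' z - ?B z * y2 z) (at z)"
      using s1(1) s2(1) unfolding P_sol_def K_def by auto
    have de: "((\<lambda>z. exp (- K * of_real z)) has_vector_derivative (- K) * exp (- K * of_real z)) (at z)"
      by (rule has_vector_derivative_real_field) (auto intro!: derivative_eq_intros)
    have "(W has_vector_derivative
       (y1 z * y2' z - y2 z * y1' z) * ((- K) * exp (- K * of_real z)) +
       ((y1 z * (K * y2' z - ?B z * y2 z) + y1' z * y2' z) - (y2 z * (K * y1' z - ?B z * y1 z) + y2' z * y1' z))
          * exp (- K * of_real z)) (at z)"
      unfolding W_def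
      by (intro has_vector_derivative_mult has_vector_derivative_diff d de)
    moreover have "(y1 z * y2' z - y2 z * y1' z) * ((- K) * exp (- K * of_real z)) +
       ((y1 z * (K * y2' z - ?B z * y2 z) + y1' z * y2' z) - (y2 z * (K * y1' z - ?B z * y1 z) + y2' z * y1' z))
          * exp (- K * of_real z) = 0"
      by (simp add: algebra_simps)
    ultimately show ?thesis by simp
  qed
  have "\<exists>k. \<forall>x\<in>UNIV. W x = k"
    by (rule has_derivative_zero_constant[of UNIV W]) (use dW in \<open>auto simp: has_vector_derivative_def\<close>)
  then have "W T = W 0" by auto
  also have "W 0 = 1" using s1 s2 by (simp add: W_def)
  finally have "(y1 T * y2' T - y2 T * y1' T) * exp (- K * of_real T) = 1" by (simp add: W_def)
  then have "y1 T * y2' T - y2 T * y1' T = exp (K * of_real T)"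
    by (metis (no_types, lifting) exp_minus_inverse mult.commute mult_minus_left nonzero_eq_divide_eq exp_not_eq_zero mult_1)
  then show ?thesis using y1 y2 by (simp add: K_def)
qed



lemma part1_explicit:
  fixes c E :: real and f f' f'' :: "real \<Rightarrow> real"
  assumes c1: "c^2 \<noteq> 1"
    and df: "\<And>z. (f has_real_derivative f' z) (at z)"
    and df': "\<And>z. (f' has_real_derivative f'' z) (at z)"
    and ode: "\<And>z. (c^2 - 1) * f'' z + sin (f z) = 0"
    and en: "\<And>z. (1/2) * (c^2 - 1) * (f' z)^2 + 1 - cos (f z) = E"
    and E0: "0 < E" and E2: "E < 2"
  shows "\<exists>\<alpha>::real. \<alpha> > 0 \<and> complex_of_real \<alpha> \<in> sigmaQ c f"
proof -
  define k where "k = c^2 - 1"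
  have k0: "k \<noteq> 0" using c1 by (simp add: k_def)
  have gk: "gam c = 1 / k" by (simp add: gam_def k_def)
  have dh: "((\<lambda>z. f z / 2) has_real_derivative f' z / 2) (at z)" for z
    by (rule DERIV_cdivide[OF df])
  have eq1: "k * f'' z = - sin (f z)" for z using ode[of z] by (simp add: k_def)
  have eq2: "k * (f' z)^2 = 2 * (E - 1 + cos (f z))" for z using en[of z] by (simp add: k_def algebra_simps)
  show ?thesis
  proof (cases "k > 0")
    case True
    define \<alpha> where "\<alpha> = sqrt (k * (1 - E/2))"
    have a0: "\<alpha> > 0" unfolding \<alpha>_def using True E2 by simp
    have a2: "\<alpha>^2 = k * (1 - E/2)" unfolding \<alpha>_def using True E2 by simp
    define q where "q z = complex_of_real (cos (f z / 2))" for z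
    define q' where "q' z = complex_of_real (- sin (f z / 2) * (f' z / 2))" for z
    have d1: "(q has_vector_derivative q' z) (at z)" for z
    proof -
      have "((\<lambda>z. cos (f z / 2)) has_real_derivative (- sin (f z / 2) * (f' z / 2))) (at z)"
        by (rule DERIV_fun_cos[OF dh])
      from has_vector_derivative_of_real[OF this] show ?thesis
        unfolding q_def q'_def .
    qed
    have d2: "(q' has_vector_derivative
        (of_real ((gam c)^2) * (of_real \<alpha>)^2 * q z - of_real (gam c * cos (f z)) * q z)) (at z)" for z
    proof -
      define s where "s = sin (f z / 2)"
      define co where "co = cos (f z / 2)"
      have sf: "sin (f z) = 2 * s * co" unfolding s_def co_def using sin_double[of "f z / 2"] by simp
      have cf: "cos (f z) = 1 - 2 * s^2" unfolding s_def using cos_double_sin[of "f z / 2"] by simp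
      have D: "((\<lambda>z. - sin (f z / 2) * (f' z / 2)) has_real_derivative
           (- (cos (f z / 2) * (f' z / 2))) * (f' z / 2) + (f'' z / 2) * (- sin (f z / 2))) (at z)"
        by (rule DERIV_mult[OF DERIV_minus[OF DERIV_fun_sin[OF dh]] DERIV_cdivide[OF df']])
      have key: "- (1/2) * (co * (f' z / 2) * f' z + s * f'' z)
          = (gam c)^2 * \<alpha>^2 * co - gam c * cos (f z) * co"
      proof -
        have "k * (- (1/2) * (co * (f' z / 2) * f' z + s * f'' z))
            = - (1/4) * co * (k * (f' z)^2) - (1/2) * s * (k * f'' z)"
          by (simp add: algebra_simps power2_eq_square)
        also have "\<dots> = co * (2 * s^2 - E/2)"
          unfolding eq1 eq2 sf cf by (simp add: algebra_simps power2_eq_square)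
        also have "\<dots> = k * ((gam c)^2 * \<alpha>^2 * co - gam c * cos (f z) * co)"
          unfolding a2 gk cf using k0 by (simp add: field_simps power2_eq_square)
        finally show ?thesis using k0 mult_left_cancel by blast
      qed
      have Deq: "(- (cos (f z / 2) * (f' z / 2))) * (f' z / 2) + (f'' z / 2) * (- sin (f z / 2))
          = (gam c)^2 * \<alpha>^2 * co - gam c * cos (f z) * co"
        using key unfolding s_def co_def by (simp add: algebra_simps)
      have R: "of_real ((gam c)^2) * (of_real \<alpha>)^2 * q z - of_real (gam c * cos (f z)) * q z
          = complex_of_real ((gam c)^2 * \<alpha>^2 * co - gam c * cos (f z) * co)"
        unfolding q_def co_def by simp
      have "(q' has_vector_derivative complex_of_real ((- (cos (f z / 2) * (f' z / 2))) * (f' z / 2) + (f'' z / 2) * (- sin (f z / 2)))) (at z)"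
        using has_vector_derivative_of_real[OF D] unfolding q'_def .
      then show ?thesis unfolding R Deq .
    qed
    have bq: "bounded (range q)"
      unfolding bounded_iff q_def by (intro exI[of _ 1]) (simp add: abs_cos_le_one)
    have "q 0 \<noteq> 0"
    proof
      assume "q 0 = 0"
      then have co0: "cos (f 0 / 2) = 0" by (simp add: q_def)
      have "cos (f 0) = 2 * (cos (f 0 / 2))^2 - 1" using cos_double_cos[of "f 0 / 2"] by simp
      then have "cos (f 0) = -1" using co0 by simp
      moreover have "k * (f' 0)^2 \<ge> 0" using True by simp
      ultimately show False using eq2[of 0] E2 by simp
    qed
    then have "complex_of_real \<alpha> \<in> sigmaQ c f"
      unfolding sigmaQ_def using d1 d2 bq by blast
    with a0 show ?thesis by blast
  next
    case False
    then have kn: "k < 0" using k0 by simp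
    define \<alpha> where "\<alpha> = sqrt (- k * (E/2))"
    have a0: "\<alpha> > 0" unfolding \<alpha>_def using kn E0 by (simp add: mult_neg_pos)
    have a2: "\<alpha>^2 = - k * (E/2)" unfolding \<alpha>_def using kn E0 by (simp add: mult_nonpos_nonneg)
    define q where "q z = complex_of_real (sin (f z / 2))" for z
    define q' where "q' z = complex_of_real (cos (f z / 2) * (f' z / 2))" for z
    have d1: "(q has_vector_derivative q' z) (at z)" for z
    proof -
      have "((\<lambda>z. sin (f z / 2)) has_real_derivative (cos (f z / 2) * (f' z / 2))) (at z)"
        by (rule DERIV_fun_sin[OF dh])
      from has_vector_derivative_of_real[OF this] show ?thesis
        unfolding q_def q'_def .
    qed
    have d2: "(q' has_vector_derivative
        (of_real ((gam c)^2) * (of_real \<alpha>)^2 * q z - of_real (gam c * cos (f z)) * q z)) (at z)" for z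
    proof -
      define s where "s = sin (f z / 2)"
      define co where "co = cos (f z / 2)"
      have sf: "sin (f z) = 2 * s * co" unfolding s_def co_def using sin_double[of "f z / 2"] by simp
      have cf: "cos (f z) = 2 * co^2 - 1" unfolding co_def using cos_double_cos[of "f z / 2"] by simp
      have D: "((\<lambda>z. cos (f z / 2) * (f' z / 2)) has_real_derivative
           (- sin (f z / 2) * (f' z / 2)) * (f' z / 2) + (f'' z / 2) * cos (f z / 2)) (at z)"
        by (rule DERIV_mult[OF DERIV_fun_cos[OF dh] DERIV_cdivide[OF df']])
      have key: "(1/2) * (- s * (f' z / 2) * f' z + co * f'' z)
          = (gam c)^2 * \<alpha>^2 * s - gam c * cos (f z) * s"
      proof -
        have "k * ((1/2) * (- s * (f' z / 2) * f' z + co * f'' z))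
            = - (1/4) * s * (k * (f' z)^2) + (1/2) * co * (k * f'' z)"
          by (simp add: algebra_simps power2_eq_square)
        also have "\<dots> = - (1/2) * s * (E - 2 + 4 * co^2)"
          unfolding eq1 eq2 sf cf by (simp add: algebra_simps power2_eq_square)
        also have "\<dots> = k * ((gam c)^2 * \<alpha>^2 * s - gam c * cos (f z) * s)"
          unfolding a2 gk cf using k0 by (simp add: field_simps power2_eq_square)
        finally show ?thesis using k0 mult_left_cancel by blast
      qed
      have Deq: "(- sin (f z / 2) * (f' z / 2)) * (f' z / 2) + (f'' z / 2) * cos (f z / 2)
          = (gam c)^2 * \<alpha>^2 * s - gam c * cos (f z) * s"
        using key unfolding s_def co_def by (simp add: algebra_simps)
      have R: "of_real ((gam c)^2) * (of_real \<alpha>)^2 * q z - of_real (gam c * cos (f z)) * q z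
          = complex_of_real ((gam c)^2 * \<alpha>^2 * s - gam c * cos (f z) * s)"
        unfolding q_def s_def by simp
      have "(q' has_vector_derivative complex_of_real ((- sin (f z / 2) * (f' z / 2)) * (f' z / 2) + (f'' z / 2) * cos (f z / 2))) (at z)"
        using has_vector_derivative_of_real[OF D] unfolding q'_def .
      then show ?thesis unfolding R Deq .
    qed
    have bq: "bounded (range q)"
      unfolding bounded_iff q_def by (intro exI[of _ 1]) (simp add: abs_sin_le_one)
    have "q 0 \<noteq> 0"
    proof
      assume "q 0 = 0"
      then have s0: "sin (f 0 / 2) = 0" by (simp add: q_def)
      have "cos (f 0) = 1 - 2 * (sin (f 0 / 2))^2" using cos_double_sin[of "f 0 / 2"] by simp
      then have "cos (f 0) = 1" using s0 by simp
      moreover have "k * (f' 0)^2 \<le> 0" using kn by (simp add: mult_nonpos_nonneg)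
      ultimately show False using eq2[of 0] E0 by simp
    qed
    then have "complex_of_real \<alpha> \<in> sigmaQ c f"
      unfolding sigmaQ_def using d1 d2 bq by blast
    with a0 show ?thesis by blast
  qed
qed



lemma geo_zero:
  fixes C :: "real \<Rightarrow> complex"
  assumes rec: "\<And>z. C (z + T) = r * C z" and bd: "\<And>z. cmod (C z) \<le> K" and r1: "cmod r \<noteq> 1"
  shows "C z = 0"
proof (rule ccontr)
  assume nz: "C z \<noteq> 0"
  have it: "C (w + real n * T) = r^n * C w" for n w
  proof (induction n)
    case 0 then show ?case by simp
  next
    case (Suc n)
    have "C (w + real (Suc n) * T) = C ((w + real n * T) + T)" by (simp add: algebra_simps)
    also have "\<dots> = r * C (w + real n * T)" by (rule rec)
    also have "\<dots> = r^Suc n * C w" using Suc by simp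
    finally show ?case .
  qed
  have K0: "K \<ge> 0" using order_trans[OF norm_ge_zero bd[of z]] .
  have cz: "cmod (C z) > 0" using nz by simp
  show False
  proof (cases "cmod r > 1")
    case True
    obtain n where n: "K / cmod (C z) < cmod r ^ n" using real_arch_pow[OF True] by blast
    then have "K < cmod r ^ n * cmod (C z)" using cz by (simp add: divide_less_eq)
    also have "\<dots> = cmod (C (z + real n * T))" using it[where n=n and w=z] by (simp add: norm_mult norm_power)
    also have "\<dots> \<le> K" by (rule bd)
    finally show False by simp
  next
    case False
    then have rl: "cmod r < 1" using r1 by simp
    have "cmod (C z) / (K + 1) > 0" using cz K0 by simp
    from real_arch_pow_inv[OF this rl] obtain n where n: "cmod r ^ n < cmod (C z) / (K + 1)" by blast
    have "C z = r^n * C (z - real n * T)" using it[where n=n and w="z - real n * T"] by simp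
    then have "cmod (C z) = cmod r ^ n * cmod (C (z - real n * T))" by (simp add: norm_mult norm_power)
    also have "\<dots> \<le> cmod r ^ n * (K + 1)" using bd[of "z - real n * T"] by (intro mult_left_mono) auto
    also have "\<dots> < cmod (C z)" using n K0 by (simp add: less_divide_eq)
    finally show False by simp
  qed
qed



lemma part2:
  fixes c T \<alpha> :: real and f :: "real \<Rightarrow> real"
  assumes c1: "c^2 \<noteq> 1" and cf: "continuous_on UNIV f"
    and per: "\<And>z. cos (f (z + T)) = cos (f z)"
    and T0: "T > 0" and c0: "c \<noteq> 0" and a0: "\<alpha> > 0"
    and mem: "complex_of_real \<alpha> \<in> sigmaQ c f"
  shows "G_p c f T (complex_of_real \<alpha>) > 0"
proof -
  define \<gamma> where "\<gamma> = gam c"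
  have g1: "\<gamma> * (c^2 - 1) = 1" using c1 by (simp add: \<gamma>_def gam_def)
  have g0: "\<gamma> \<noteq> 0" using g1 by auto
  define lam where "lam = complex_of_real \<alpha>"
  obtain q q' where dq: "\<And>z. (q has_vector_derivative q' z) (at z)"
    and dq': "\<And>z. (q' has_vector_derivative
              (of_real (\<gamma>^2) * lam^2 * q z - of_real (\<gamma> * cos (f z)) * q z)) (at z)"
    and bq: "bounded (range q)" and nz: "\<exists>z. q z \<noteq> 0"
    using mem unfolding sigmaQ_def \<gamma>_def lam_def by blast
  define \<mu> where "\<mu> = c * \<gamma> * \<alpha>"
  have mu0: "\<mu> \<noteq> 0" using c0 g0 a0 by (simp add: \<mu>_def)
  have hmu: "\<mu>^2 = \<gamma>^2 * \<alpha>^2 + \<gamma> * \<alpha>^2"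
  proof -
    have "\<mu>^2 = \<gamma> * \<alpha>^2 * (\<gamma> * c^2)" by (simp add: \<mu>_def power2_eq_square algebra_simps)
    also have "\<gamma> * c^2 = \<gamma> + 1" using g1 by (simp add: algebra_simps)
    finally show ?thesis by (simp add: algebra_simps power2_eq_square)
  qed
  define e where "e z = exp (\<mu> * z)" for z
  define p0 where "p0 z = complex_of_real (e z) * q z" for z
  define p0' where "p0' z = complex_of_real (e z) * (q' z + of_real \<mu> * q z)" for z
  have de: "((\<lambda>z. complex_of_real (e z)) has_vector_derivative complex_of_real (exp (\<mu> * z) * \<mu>)) (at z)" for z
    unfolding e_def by (rule has_vector_derivative_of_real[OF DERIV_fun_exp[OF DERIV_cmult_Id]])
  have P: "P_sol c f lam (p0, p0')"
    unfolding P_sol_def fst_conv snd_conv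
  proof (intro allI conjI)
    fix z
    have D1: "(p0 has_vector_derivative complex_of_real (e z) * q' z + complex_of_real (exp (\<mu> * z) * \<mu>) * q z) (at z)"
      unfolding p0_def by (rule has_vector_derivative_mult[OF de dq])
    have "complex_of_real (e z) * q' z + complex_of_real (exp (\<mu> * z) * \<mu>) * q z = p0' z"
      by (simp add: p0'_def e_def algebra_simps)
    with D1 show "(p0 has_vector_derivative p0' z) (at z)" by simp
    define Q2 where "Q2 = of_real (\<gamma>^2) * lam^2 * q z - of_real (\<gamma> * cos (f z)) * q z"
    have D2: "(p0' has_vector_derivative complex_of_real (e z) * (Q2 + of_real \<mu> * q' z)
          + complex_of_real (exp (\<mu> * z) * \<mu>) * (q' z + of_real \<mu> * q z)) (at z)"
      unfolding p0'_def Q2_def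
      by (rule has_vector_derivative_mult[OF de has_vector_derivative_add[OF dq' has_vector_derivative_mult_right[OF dq]]])
    define m where "m = complex_of_real \<mu>"
    define g where "g = complex_of_real \<gamma>"
    define Cc where "Cc = complex_of_real (cos (f z))"
    define ee where "ee = complex_of_real (e z)"
    have hm: "m^2 = g^2 * lam^2 + g * lam^2"
      unfolding m_def g_def lam_def using arg_cong[OF hmu, of complex_of_real] by simp
    have c2: "complex_of_real (2 * c * \<gamma>) * lam = 2 * m"
      by (simp add: m_def lam_def \<mu>_def)
    have "complex_of_real (e z) * (Q2 + of_real \<mu> * q' z)
          + complex_of_real (exp (\<mu> * z) * \<mu>) * (q' z + of_real \<mu> * q z)
        = ee * ((g^2 * lam^2 * q z - g * Cc * q z) + m * q' z) + ee * m * (q' z + m * q z)"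
      by (simp add: ee_def Q2_def g_def Cc_def m_def e_def)
    also have "\<dots> = 2 * m * (ee * (q' z + m * q z)) - g * (lam^2 + Cc) * (ee * q z) + ee * q z * ((g^2 * lam^2 + g * lam^2) - m^2)"
      by (simp add: algebra_simps power2_eq_square)
    also have "\<dots> = 2 * m * (ee * (q' z + m * q z)) - g * (lam^2 + Cc) * (ee * q z)"
      by (simp add: hm)
    also have "\<dots> = complex_of_real (2 * c * gam c) * lam * p0' z
          - complex_of_real (gam c) * (lam^2 + complex_of_real (cos (f z))) * p0 z"
      by (simp add: c2[unfolded \<gamma>_def] p0_def p0'_def ee_def g_def \<gamma>_def Cc_def m_def \<mu>_def lam_def)
    finally show "(p0' has_vector_derivative complex_of_real (2 * c * gam c) * lam * p0' z
          - complex_of_real (gam c) * (lam^2 + complex_of_real (cos (f z))) * p0 z) (at z)"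
      using D2 by simp
  qed
  define A where "A = fst (fund1 c f lam) T"
  define B where "B = fst (fund2 c f lam) T"
  define Dd where "Dd = snd (fund1 c f lam) T"
  define Ee where "Ee = snd (fund2 c f lam) T"
  define eps where "eps = complex_of_real (exp (\<mu> * T))"
  have eps0: "eps \<noteq> 0" by (simp add: eps_def)
  have Dv: "A * Ee - B * Dd = eps^2"
  proof -
    have "A * Ee - B * Dd = exp (complex_of_real (2 * c * gam c) * lam * complex_of_real T)"
      using P_wronsk[OF cf, of c lam T] by (simp add: A_def B_def Dd_def Ee_def algebra_simps)
    also have "complex_of_real (2 * c * gam c) * lam * complex_of_real T = complex_of_real (2 * (\<mu> * T))"
      by (simp add: lam_def \<mu>_def \<gamma>_def)
    also have "exp (complex_of_real (2 * (\<mu> * T))) = eps^2"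
      by (simp add: eps_def exp_of_real[symmetric] exp_double[symmetric] del: exp_of_real)
    finally show ?thesis .
  qed
  have rec0: "p0 (z + T + T) - (A + Ee) * p0 (z + T) + (A * Ee - B * Dd) * p0 z = 0" for z
    using P_rec[OF cf P per] by (simp add: A_def B_def Dd_def Ee_def)
  define rp where "rp = floquet_plus c f T lam"
  define rm where "rm = floquet_minus c f T lam"
  define s where "s = csqrt ((A + Ee)^2 - 4 * (A * Ee - B * Dd))"
  have rp_def': "rp = ((A + Ee) + s) / 2" and rm_def': "rm = ((A + Ee) - s) / 2"
    by (simp_all add: rp_def rm_def floquet_plus_def floquet_minus_def monodromy_def s_def
                      A_def B_def Dd_def Ee_def)
  have sum: "rp + rm = A + Ee" by (simp add: rp_def' rm_def' field_simps)
  have prod: "rp * rm = eps^2"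
  proof -
    have "rp * rm = ((A + Ee)^2 - s^2) / 4" by (simp add: rp_def' rm_def' field_simps power2_eq_square)
    also have "s^2 = (A + Ee)^2 - 4 * (A * Ee - B * Dd)" by (simp add: s_def)
    finally show ?thesis using Dv by simp
  qed
  define r1 where "r1 = rp / eps"
  define r2 where "r2 = rm / eps"
  have r12: "r1 * r2 = 1" using prod eps0 by (simp add: r1_def r2_def field_simps power2_eq_square)
  have rs: "r1 + r2 = (A + Ee) / eps" using sum eps0 by (simp add: r1_def r2_def field_simps)
  have recq: "q (z + T + T) - (r1 + r2) * q (z + T) + (r1 * r2) * q z = 0" for z
  proof -
    define ez where "ez = complex_of_real (exp (\<mu> * z))"
    have ez0: "ez \<noteq> 0" by (simp add: ez_def)
    have e1: "p0 (z + T) = ez * eps * q (z + T)"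
      by (simp add: p0_def e_def ez_def eps_def distrib_left exp_add)
    have ex2: "exp (\<mu> * (z + T + T)) = exp (\<mu> * z) * exp (\<mu> * T) * exp (\<mu> * T)"
      by (simp only: distrib_left exp_add)
    have e2: "p0 (z + T + T) = ez * eps^2 * q (z + T + T)"
      unfolding p0_def e_def ex2 ez_def eps_def power2_eq_square by simp
    have e0: "p0 z = ez * q z" by (simp add: p0_def e_def ez_def)
    have "ez * eps^2 * (q (z + T + T) - (r1 + r2) * q (z + T) + (r1 * r2) * q z) = 0"
      using rec0[of z] unfolding e0 e1 e2 Dv rs r12 using eps0
      by (simp add: field_simps power2_eq_square)
    then show ?thesis using ez0 eps0 by simp
  qed
  obtain Kq where Kq: "\<And>z. cmod (q z) \<le> Kq" using bq unfolding bounded_iff by auto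
  have rr: "cmod r1 = 1"
  proof (rule ccontr)
    assume n1: "cmod r1 \<noteq> 1"
    have "cmod r1 * cmod r2 = 1" using arg_cong[OF r12, of cmod] by (simp add: norm_mult)
    then have n2: "cmod r2 \<noteq> 1" using n1 by auto
    have ra: "r1 * (r2 * w) = w" "r2 * (r1 * w) = w" for w
      using r12 by (metis mult.assoc mult_1, metis mult.assoc mult.commute mult_1)
    have Crec: "q (z + T + T) - r2 * q (z + T) = r1 * (q (z + T) - r2 * q z)" for z
      using recq[of z] by (simp add: algebra_simps ra)
    have Drec: "q (z + T + T) - r1 * q (z + T) = r2 * (q (z + T) - r1 * q z)" for z
      using recq[of z] by (simp add: algebra_simps ra)
    have bC: "cmod (q (z + T) - r * q z) \<le> Kq + cmod r * Kq" for z r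
    proof -
      have "cmod (q (z + T) - r * q z) \<le> cmod (q (z + T)) + cmod (r * q z)" by (rule norm_triangle_ineq4)
      also have "\<dots> = cmod (q (z + T)) + cmod r * cmod (q z)" by (simp add: norm_mult)
      also have "\<dots> \<le> Kq + cmod r * Kq" by (intro add_mono mult_left_mono Kq) simp
      finally show ?thesis .
    qed
    have C0: "q (z + T) - r2 * q z = 0" for z
      by (rule geo_zero[of "\<lambda>z. q (z + T) - r2 * q z" T r1 "Kq + cmod r2 * Kq"]) (use Crec bC n1 in auto)
    have D0: "q (z + T) - r1 * q z = 0" for z
      by (rule geo_zero[of "\<lambda>z. q (z + T) - r1 * q z" T r2 "Kq + cmod r1 * Kq"]) (use Drec bC n2 in auto)
    have neq: "r1 \<noteq> r2"
    proof
      assume "r1 = r2"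
      then have "r1 * r1 = 1" using r12 by simp
      then have "cmod (r1 * r1) = 1" by simp
      then have "(cmod r1)^2 = 1" by (simp add: norm_mult power2_eq_square)
      then have "cmod r1 = 1 \<or> cmod r1 = -1" by (simp add: power2_eq_1_iff)
      then show False using n1 norm_ge_zero[of r1] by linarith
    qed
    obtain z0 where z0: "q z0 \<noteq> 0" using nz by blast
    have "(r1 - r2) * q z0 = (q (z0 + T) - r2 * q z0) - (q (z0 + T) - r1 * q z0)"
      by (simp add: algebra_simps)
    also have "\<dots> = 0" by (simp only: C0 D0 diff_self)
    finally have "(r1 - r2) * q z0 = 0" .
    then show False using neq z0 by simp
  qed
  have rr2: "cmod r2 = 1" using arg_cong[OF r12, of cmod] rr by (simp add: norm_mult)
  have np: "cmod rp = exp (\<mu> * T)" using rr eps0 by (simp add: r1_def eps_def norm_divide)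
  have nm: "cmod rm = exp (\<mu> * T)" using rr2 eps0 by (simp add: r2_def eps_def norm_divide)
  have "G_p c f T lam = (\<mu> * T) * (\<mu> * T)"
    unfolding G_p_def rp_def[symmetric] rm_def[symmetric] np nm by simp
  also have "\<dots> > 0" proof - have "\<mu> * T \<noteq> 0" using mu0 T0 by simp then show ?thesis by (metis not_real_square_gt_zero) qed
  finally show ?thesis by (simp add: lam_def)
qed


theorem lemma3p13:
  fixes c E T :: real and f f' :: "real \<Rightarrow> real"
  assumes "traveling_wave c f f'"
    and "energy c f f' E"
    and "0 < E" and "E < 2"
    and "fundamental_period f T"
  shows "(\<exists>\<alpha>::real. \<alpha> > 0 \<and> complex_of_real \<alpha> \<in> sigmaQ c f) \<and>
         (c \<noteq> 0 \<longrightarrow> (\<forall>\<alpha>::real. \<alpha> > 0 \<and> complex_of_real \<alpha> \<in> sigmaQ c f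
                          \<longrightarrow> G_p c f T (complex_of_real \<alpha>) > 0))"
proof -
  from assms(1) obtain f'' where c1: "c^2 \<noteq> 1"
    and H: "\<forall>z. (f has_real_derivative f' z) (at z) \<and> (f' has_real_derivative f'' z) (at z)
              \<and> (c^2 - 1) * f'' z + sin (f z) = 0"
    unfolding traveling_wave_def by blast
  have df: "\<And>z. (f has_real_derivative f' z) (at z)" using H by blast
  have df': "\<And>z. (f' has_real_derivative f'' z) (at z)" using H by blast
  have ode: "\<And>z. (c^2 - 1) * f'' z + sin (f z) = 0" using H by blast
  have en: "\<And>z. (1/2) * (c^2 - 1) * (f' z)^2 + 1 - cos (f z) = E"
    using assms(2) unfolding energy_def by blast
  have cf: "continuous_on UNIV f"
    by (rule continuous_at_imp_continuous_on) (use df DERIV_isCont in blast)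
  from assms(5) have T0: "T > 0" and pm: "period_mod_2pi f T"
    unfolding fundamental_period_def by auto
  then obtain k :: int where fk: "\<And>z. f (z + T) = f z + 2 * pi * of_int k"
    unfolding period_mod_2pi_def by blast
  have per: "\<And>z. cos (f (z + T)) = cos (f z)" by (simp add: fk cos_add)
  show ?thesis
    using part1_explicit[OF c1 df df' ode en assms(3) assms(4)] part2[OF c1 cf per T0] by blast
qed

end
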